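(* Let $G$ be a finite simple graph of order $n$, and for $k\in\{0,1,\dots,n\}$ let $c_k$ denote the number of connected sets of $G$ of order $k$. Then \[ 2c_k\leq (n-k+1)c_{k-1} \] for all $k\in\{2,\dots,n\}$. More generally, \[ (k-t+1)c_k\leq \binom{n-t}{k-t}c_t \] for all $k\in\{2,\dots,n\}$ and $t\in\{1,\dots,k-1\}$.
   Context: A subset $C$ of the vertex set of a graph $G$ is a connected set if it is nonempty and the induced subgraph $G[C]$ is connected. The order of a connected set is its cardinality; in particular $c_0=0$. *)

theory Defs
  imports Main
begin

definition simple_graph :: "'a set \<Rightarrow> ('a \<Rightarrow> 'a \<Rightarrow> bool) \<Rightarrow> bool" where
  "simple_graph V E \<longleftrightarrow> finite V \<and> (\<forall>x y. E x y \<longrightarrow> x \<in> V \<and> y \<in> V)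
     \<and> (\<forall>x y. E x y \<longrightarrow> E y x) \<and> (\<forall>x. \<not> E x x)"

definition induced_connected :: "('a \<Rightarrow> 'a \<Rightarrow> bool) \<Rightarrow> 'a set \<Rightarrow> bool" where
  "induced_connected E C \<longleftrightarrow>
     (\<forall>x\<in>C. \<forall>y\<in>C. (x, y) \<in> {(a, b). a \<in> C \<and> b \<in> C \<and> E a b}\<^sup>*)"

definition connected_set :: "'a set \<Rightarrow> ('a \<Rightarrow> 'a \<Rightarrow> bool) \<Rightarrow> 'a set \<Rightarrow> bool" where
  "connected_set V E C \<longleftrightarrow> C \<subseteq> V \<and> C \<noteq> {} \<and> induced_connected E C"

text \<open>Number of connected sets of order k (so c 0 = 0).\<close>
definition num_connected_sets :: "'a set \<Rightarrow> ('a \<Rightarrow> 'a \<Rightarrow> bool) \<Rightarrow> nat \<Rightarrow> nat" where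
  "num_connected_sets V E k = card {C. connected_set V E C \<and> card C = k}"

end

theory Submission
  imports Defs
begin

definition cc :: "('a \<Rightarrow> 'a \<Rightarrow> bool) \<Rightarrow> 'a set \<Rightarrow> nat \<Rightarrow> 'a set set" where
  "cc E C t = {D. D \<subseteq> C \<and> induced_connected E D \<and> card D = t}"

lemma leave:
  assumes ic: "induced_connected E C" and "D \<subseteq> C" "x \<in> D" "y \<in> C" "y \<notin> D"
  shows "\<exists>w\<in>C - D. \<exists>d\<in>D. E d w"
proof -
  let ?R = "{(a, b). a \<in> C \<and> b \<in> C \<and> E a b}"
  have "(x, y) \<in> ?R\<^sup>*" using ic assms unfolding induced_connected_def by blast
  then have "y \<notin> D \<longrightarrow> (\<exists>w\<in>C - D. \<exists>d\<in>D. E d w)"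
  proof (induction rule: rtrancl_induct)
    case base then show ?case using \<open>x \<in> D\<close> by blast
  next
    case (step y z)
    then show ?case by (cases "y \<in> D") auto
  qed
  then show ?thesis using assms by blast
qed

lemma ic_insert:
  assumes sym: "\<forall>x y. E x y \<longrightarrow> E y x"
    and ic: "induced_connected E D" and d: "d \<in> D" and e: "E d w"
  shows "induced_connected E (insert w D)"
proof -
  let ?R = "{(a, b). a \<in> D \<and> b \<in> D \<and> E a b}"
  let ?S = "{(a, b). a \<in> insert w D \<and> b \<in> insert w D \<and> E a b}"
  have sub: "?R\<^sup>* \<subseteq> ?S\<^sup>*" by (rule rtrancl_mono) auto
  have wd: "(w, d) \<in> ?S\<^sup>*" using d e sym by blast
  have dw: "(d, w) \<in> ?S\<^sup>*" using d e by blast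
  have inD: "\<And>x y. x \<in> D \<Longrightarrow> y \<in> D \<Longrightarrow> (x, y) \<in> ?S\<^sup>*"
    using ic sub unfolding induced_connected_def by blast
  show ?thesis unfolding induced_connected_def
  proof (intro ballI)
    fix x y assume x: "x \<in> insert w D" and y: "y \<in> insert w D"
    show "(x, y) \<in> ?S\<^sup>*"
    proof (cases "x = w")
      case True
      then show ?thesis
      proof (cases "y = w")
        case True then show ?thesis using \<open>x = w\<close> by simp
      next
        case False then have "y \<in> D" using y by simp
        then show ?thesis using True wd inD[OF d] by (meson rtrancl_trans)
      qed
    next
      case False then have xD: "x \<in> D" using x by simp
      show ?thesis
      proof (cases "y = w")
        case True then show ?thesis using dw inD[OF xD d] by (meson rtrancl_trans)
      next
        case False then have "y \<in> D" using y by simp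
        then show ?thesis using inD xD by blast
      qed
    qed
  qed
qed

lemma grow:
  assumes sym: "\<forall>x y. E x y \<longrightarrow> E y x"
    and ic: "induced_connected E C" and fin: "finite C" and u: "u \<in> C"
  shows "1 \<le> s \<Longrightarrow> s \<le> card C \<Longrightarrow> \<exists>D\<subseteq>C. u \<in> D \<and> induced_connected E D \<and> card D = s"
proof (induction s)
  case 0 then show ?case by simp
next
  case (Suc s)
  show ?case
  proof (cases "s = 0")
    case True
    have "induced_connected E {u}" unfolding induced_connected_def by auto
    then show ?thesis using True u by (intro exI[of _ "{u}"]) auto
  next
    case False
    then have "1 \<le> s" "s \<le> card C" using Suc.prems by auto
    then obtain D where D: "D \<subseteq> C" "u \<in> D" "induced_connected E D" "card D = s"
      using Suc.IH by blast
    have "D \<noteq> C" using D Suc.prems by auto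
    then obtain y where y: "y \<in> C" "y \<notin> D" using D by blast
    obtain w d where w: "w \<in> C - D" "d \<in> D" "E d w" using leave[OF ic D(1) D(2) y] by blast
    have finD: "finite D" using D(1) fin finite_subset by blast
    have "induced_connected E (insert w D)" using ic_insert[OF sym D(3) w(2) w(3)] .
    moreover have "card (insert w D) = Suc s" using D(4) w(1) finD by simp
    ultimately show ?thesis using D w by (intro exI[of _ "insert w D"]) auto
  qed
qed

lemma count:
  assumes sym: "\<forall>x y. E x y \<longrightarrow> E y x"
  shows "finite C \<Longrightarrow> induced_connected E C \<Longrightarrow> card C = k \<Longrightarrow> 1 \<le> t \<Longrightarrow> t \<le> k
     \<Longrightarrow> k - t + 1 \<le> card (cc E C t)"
proof (induction k arbitrary: C)
  case 0 then show ?case by simp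
next
  case (Suc k)
  have finc: "finite (cc E C t)"
    by (rule finite_subset[of _ "Pow C"]) (use Suc.prems in \<open>auto simp: cc_def\<close>)
  show ?case
  proof (cases "t = Suc k")
    case True
    have "C \<in> cc E C t" using Suc.prems True by (auto simp: cc_def)
    then have "card (cc E C t) \<ge> 1" using finc
      by (metis One_nat_def Suc_leI card_gt_0_iff empty_iff)
    then show ?thesis using True by simp
  next
    case False
    then have tk: "t \<le> k" using Suc.prems by simp
    have "C \<noteq> {}" using Suc.prems by auto
    then obtain u where u: "u \<in> C" by blast
    obtain D0 where D0: "D0 \<subseteq> C" "induced_connected E D0" "card D0 = k"
      using grow[OF sym Suc.prems(2) Suc.prems(1) u, of k] Suc.prems tk by auto
    have finD0: "finite D0" using D0 Suc.prems finite_subset by blast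
    have "card (C - D0) = 1" using D0 Suc.prems by (simp add: card_Diff_subset finD0)
    then obtain v where v: "C - D0 = {v}" by (rule card_1_singletonE)
    have vC: "v \<in> C" "v \<notin> D0" using v by auto
    obtain S where S: "S \<subseteq> C" "v \<in> S" "induced_connected E S" "card S = t"
      using grow[OF sym Suc.prems(2) Suc.prems(1) vC(1), of t] Suc.prems tk by auto
    have IH: "k - t + 1 \<le> card (cc E D0 t)"
      using Suc.IH[OF finD0 D0(2) D0(3)] Suc.prems tk by simp
    have sub: "insert S (cc E D0 t) \<subseteq> cc E C t" using S D0 by (auto simp: cc_def)
    have notin: "S \<notin> cc E D0 t" using S vC by (auto simp: cc_def)
    have finD: "finite (cc E D0 t)"
      by (rule finite_subset[of _ "Pow D0"]) (use finD0 in \<open>auto simp: cc_def\<close>)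
    have "card (insert S (cc E D0 t)) \<le> card (cc E C t)" using card_mono[OF finc sub] .
    then have "card (cc E D0 t) + 1 \<le> card (cc E C t)" using notin finD by simp
    then show ?thesis using IH tk by linarith
  qed
qed

lemma card_filter_sum:
  "finite S \<Longrightarrow> card {x\<in>S. P x} = (\<Sum>x\<in>S. if P x then 1 else 0)"
  by (simp add: sum.inter_filter[symmetric])

lemma general:
  assumes g: "simple_graph V E" and n: "card V = n" and t: "1 \<le> t" "t \<le> k"
  shows "(k - t + 1) * num_connected_sets V E k \<le> (n - t choose (k - t)) * num_connected_sets V E t"
proof -
  have sym: "\<forall>x y. E x y \<longrightarrow> E y x" and finV: "finite V"
    using g unfolding simple_graph_def by auto
  define A where "A = {C. connected_set V E C \<and> card C = k}"
  define B where "B = {C. connected_set V E C \<and> card C = t}"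
  have finA: "finite A" unfolding A_def connected_set_def
    by (rule finite_subset[of _ "Pow V"]) (use finV in auto)
  have finB: "finite B" unfolding B_def connected_set_def
    by (rule finite_subset[of _ "Pow V"]) (use finV in auto)
  have lo: "k - t + 1 \<le> card {D\<in>B. D \<subseteq> C}" if C: "C \<in> A" for C
  proof -
    have CV: "C \<subseteq> V" "induced_connected E C" "card C = k" using C by (auto simp: A_def connected_set_def)
    have finC: "finite C" using CV finV finite_subset by blast
    have "{D\<in>B. D \<subseteq> C} = cc E C t"
      using CV t by (auto simp: B_def cc_def connected_set_def)
    then show ?thesis using count[OF sym finC CV(2) CV(3) t] by simp
  qed
  have hi: "card {C\<in>A. D \<subseteq> C} \<le> (n - t choose (k - t))" if D: "D \<in> B" for D
  proof -
    have DV: "D \<subseteq> V" "card D = t" using D by (auto simp: B_def connected_set_def)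
    have finD: "finite D" using DV finV finite_subset by blast
    have "card {C\<in>A. D \<subseteq> C} \<le> card {X. X \<subseteq> V - D \<and> card X = k - t}"
    proof (rule card_inj_on_le[where f = "\<lambda>C. C - D"])
      show "inj_on (\<lambda>C. C - D) {C \<in> A. D \<subseteq> C}"
        by (rule inj_onI) blast
      show "(\<lambda>C. C - D) ` {C \<in> A. D \<subseteq> C} \<subseteq> {X. X \<subseteq> V - D \<and> card X = k - t}"
      proof
        fix X assume "X \<in> (\<lambda>C. C - D) ` {C \<in> A. D \<subseteq> C}"
        then obtain C where C: "C \<in> A" "D \<subseteq> C" "X = C - D" by blast
        have CV: "C \<subseteq> V" "card C = k" using C by (auto simp: A_def connected_set_def)
        show "X \<in> {X. X \<subseteq> V - D \<and> card X = k - t}"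
          using C CV DV by (auto simp: card_Diff_subset finD)
      qed
      show "finite {X. X \<subseteq> V - D \<and> card X = k - t}"
        by (rule finite_subset[of _ "Pow V"]) (use finV in auto)
    qed
    also have "\<dots> = card (V - D) choose (k - t)" using finV by (simp add: n_subsets)
    also have "card (V - D) = n - t" using DV n finD by (simp add: card_Diff_subset)
    finally show ?thesis .
  qed
  have "card A * (k - t + 1) \<le> (\<Sum>C\<in>A. card {D\<in>B. D \<subseteq> C})"
    using sum_bounded_below[of A "k - t + 1" "\<lambda>C. card {D\<in>B. D \<subseteq> C}"] lo by simp
  also have "\<dots> = (\<Sum>C\<in>A. \<Sum>D\<in>B. if D \<subseteq> C then 1 else 0)"
    using finB by (simp add: card_filter_sum)
  also have "\<dots> = (\<Sum>D\<in>B. \<Sum>C\<in>A. if D \<subseteq> C then 1 else 0)"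
    by (rule sum.swap)
  also have "\<dots> = (\<Sum>D\<in>B. card {C\<in>A. D \<subseteq> C})"
    using finA by (simp add: card_filter_sum)
  also have "\<dots> \<le> card B * (n - t choose (k - t))"
    using sum_bounded_above[of B "\<lambda>D. card {C\<in>A. D \<subseteq> C}" "n - t choose (k - t)"] hi by simp
  finally show ?thesis unfolding num_connected_sets_def A_def B_def by (simp add: mult.commute)
qed

theorem lemma2p2:
  fixes V :: "'a set" and E :: "'a \<Rightarrow> 'a \<Rightarrow> bool" and n :: nat
  assumes "simple_graph V E" and "card V = n"
  shows "(\<forall>k\<in>{2..n}. 2 * num_connected_sets V E k
            \<le> (n - k + 1) * num_connected_sets V E (k - 1))
       \<and> (\<forall>k\<in>{2..n}. \<forall>t\<in>{1..k-1}.
            (k - t + 1) * num_connected_sets V E k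
            \<le> (n - t choose (k - t)) * num_connected_sets V E t)"
proof (intro conjI ballI)
  fix k assume k: "k \<in> {2..n}"
  have eq: "k - (k - 1) + 1 = 2" "k - (k - 1) = 1" "n - (k - 1) = n - k + 1" using k by auto
  have "(k - (k - 1) + 1) * num_connected_sets V E k
      \<le> (n - (k - 1) choose (k - (k - 1))) * num_connected_sets V E (k - 1)"
    using general[OF assms, of "k - 1" k] k by auto
  then show "2 * num_connected_sets V E k \<le> (n - k + 1) * num_connected_sets V E (k - 1)"
    unfolding eq by (simp only: choose_one one_add_one)
next
  fix k t assume k: "k \<in> {2..n}" and t: "t \<in> {1..k-1}"
  show "(k - t + 1) * num_connected_sets V E k \<le> (n - t choose (k - t)) * num_connected_sets V E t"
    using general[OF assms, of t k] k t by auto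
qed

end
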